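(* Let $\Lambda$ be the weight lattice of type ${\rm D}_4$, with $\mathbb{Z}$-basis of fundamental weights $\omega_1=e_1$, $\omega_2=e_1+e_2$, $\omega_3=\tfrac12(e_1+e_2+e_3-e_4)$, $\omega_4=\tfrac12(e_1+e_2+e_3+e_4)$ (inside $\mathbb{Q}^4$ with standard basis $e_1,\ldots,e_4$), let $W$ be the Weyl group of ${\rm D}_4$, and let $T^*\subset\Lambda$ be the sublattice of vectors with integer coordinates whose coordinate sum is even (the character lattice of the split maximal torus of $\mathbf{PGO}_8$). For $i=1,\ldots,4$ put $\rho_i=\sum_{\lambda\in W(\omega_i)}e^{\lambda}-|W(\omega_i)|\in\mathbb{Z}[\Lambda]$. If $f_1,\ldots,f_4\in\mathbb{Z}[\Lambda]$ satisfy $f_1\rho_1+f_2\rho_2+f_3\rho_3+f_4\rho_4\in\mathbb{Z}[T^*]$, then for each $i\in\{1,3,4\}$ the sum of all coefficients of $f_i$ is even.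
   Context: $W$ acts on $\mathbb{Q}^4$ by permutations of the coordinates and an even number of sign changes. $\mathbb{Z}[\Lambda]$ is the group ring of $\Lambda$ with basis $e^\lambda$, $\lambda\in\Lambda$. *)

theory Defs
  imports "HOL-Analysis.Analysis" "HOL-Library.Poly_Mapping"
begin

text \<open>Ambient space Q^4 (coordinates e_1..e_4 = positions 1..4 of vector).\<close>
type_synonym wt = "rat ^ 4"

definition omega1 :: wt where "omega1 = vector [1, 0, 0, 0]"
definition omega2 :: wt where "omega2 = vector [1, 1, 0, 0]"
definition omega3 :: wt where "omega3 = vector [1/2, 1/2, 1/2, -1/2]"
definition omega4 :: wt where "omega4 = vector [1/2, 1/2, 1/2, 1/2]"

definition D4_lattice :: "wt set" where
  "D4_lattice = {of_int a *s omega1 + of_int b *s omega2 + of_int c *s omega3 + of_int d *s omega4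
                 | a b c d :: int. True}"

definition D4_Weyl :: "(wt \<Rightarrow> wt) set" where
  "D4_Weyl = {(\<lambda>x. \<chi> i. of_int (s i) * x $ (\<sigma> i)) | \<sigma> (s :: 4 \<Rightarrow> int).
                 bij \<sigma> \<and> (\<forall>i. s i = 1 \<or> s i = -1) \<and> (\<Prod>i\<in>UNIV. s i) = 1}"

definition W_orbit :: "wt \<Rightarrow> wt set" where
  "W_orbit \<omega> = {w \<omega> | w. w \<in> D4_Weyl}"

text \<open>Group ring Z[Q^4] is the type of finitely supported maps; Z[S] consists of elements supported in S.\<close>
definition group_ring_on :: "wt set \<Rightarrow> (wt \<Rightarrow>\<^sub>0 int) set" where
  "group_ring_on S = {f. Poly_Mapping.keys f \<subseteq> S}"

definition rho :: "wt \<Rightarrow> (wt \<Rightarrow>\<^sub>0 int)" where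
  "rho \<omega> = (\<Sum>\<mu>\<in>W_orbit \<omega>. Poly_Mapping.single \<mu> 1) - of_nat (card (W_orbit \<omega>))"

definition T_star :: "wt set" where
  "T_star = {x. (\<forall>i. x $ i \<in> \<int>) \<and> (\<exists>k::int. (\<Sum>i\<in>UNIV. x $ i) = of_int (2 * k))}"

definition coeff_sum :: "(wt \<Rightarrow>\<^sub>0 int) \<Rightarrow> int" where
  "coeff_sum f = (\<Sum>\<mu>\<in>Poly_Mapping.keys f. Poly_Mapping.lookup f \<mu>)"

end

theory Submission
  imports Defs "HOL-Combinatorics.Transposition"
begin


definition LF :: "(wt \<Rightarrow> int) \<Rightarrow> (wt \<Rightarrow>\<^sub>0 int) \<Rightarrow> int" where
  "LF e g = (\<Sum>\<mu>\<in>Poly_Mapping.keys g. Poly_Mapping.lookup g \<mu> * e \<mu>)"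

lemma LF_superset:
  assumes "finite S" "Poly_Mapping.keys g \<subseteq> S"
  shows "LF e g = (\<Sum>\<mu>\<in>S. Poly_Mapping.lookup g \<mu> * e \<mu>)"
  unfolding LF_def using assms
  by (intro sum.mono_neutral_left) (auto simp: in_keys_iff)

lemma LF_add: "LF e (g + h) = LF e g + LF e h"
proof -
  let ?S = "Poly_Mapping.keys g \<union> Poly_Mapping.keys h \<union> Poly_Mapping.keys (g + h)"
  have f: "finite ?S" by simp
  have "LF e (g + h) = (\<Sum>\<mu>\<in>?S. Poly_Mapping.lookup (g+h) \<mu> * e \<mu>)"
    by (rule LF_superset[OF f]) auto
  also have "\<dots> = (\<Sum>\<mu>\<in>?S. Poly_Mapping.lookup g \<mu> * e \<mu>) + (\<Sum>\<mu>\<in>?S. Poly_Mapping.lookup h \<mu> * e \<mu>)"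
    by (simp add: lookup_add distrib_right sum.distrib)
  also have "\<dots> = LF e g + LF e h"
    by (subst (1 2) LF_superset[OF f]) auto
  finally show ?thesis .
qed

lemma LF_uminus: "LF e (- g) = - LF e g"
proof -
  have "Poly_Mapping.keys (- g) = Poly_Mapping.keys g" by (auto simp: in_keys_iff)
  then show ?thesis unfolding LF_def by (simp add: sum_negf)
qed

lemma LF_diff: "LF e (g - h) = LF e g - LF e h"
  using LF_add[of e g "-h"] by (simp add: LF_uminus)

lemma LF_single: "LF e (Poly_Mapping.single x c) = c * e x"
  unfolding LF_def by (cases "c = 0") auto

lemma LF_zero: "LF e 0 = 0"
  unfolding LF_def by simp

lemma LF_sum: "finite A \<Longrightarrow> LF e (\<Sum>a\<in>A. G a) = (\<Sum>a\<in>A. LF e (G a))"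
  by (induction A rule: finite_induct) (auto simp: LF_zero LF_add)

lemma pm_decomp: "f = (\<Sum>\<mu>\<in>Poly_Mapping.keys f. Poly_Mapping.single \<mu> (Poly_Mapping.lookup f \<mu>))"
proof (rule poly_mapping_eqI)
  fix k
  show "Poly_Mapping.lookup f k = Poly_Mapping.lookup (\<Sum>\<mu>\<in>Poly_Mapping.keys f. Poly_Mapping.single \<mu> (Poly_Mapping.lookup f \<mu>)) k"
    by (cases "k \<in> Poly_Mapping.keys f")
       (auto simp: lookup_sum lookup_single when_def in_keys_iff)
qed

lemma LF_rho:
  fixes f :: "wt \<Rightarrow>\<^sub>0 int"
  assumes "finite Orb"
  shows "LF e (f * ((\<Sum>\<nu>\<in>Orb. Poly_Mapping.single \<nu> 1) - of_nat n)) =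
    (\<Sum>\<mu>\<in>Poly_Mapping.keys f. Poly_Mapping.lookup f \<mu> * ((\<Sum>\<nu>\<in>Orb. e (\<mu> + \<nu>)) - int n * e \<mu>))"
proof -
  let ?R = "(\<Sum>\<nu>\<in>Orb. Poly_Mapping.single \<nu> (1::int)) - of_nat n"
  have one: "Poly_Mapping.single \<mu> c * ?R =
      (\<Sum>\<nu>\<in>Orb. Poly_Mapping.single (\<mu> + \<nu>) c) - Poly_Mapping.single \<mu> (c * of_nat n)" for \<mu> and c :: int
  proof -
    have "Poly_Mapping.single \<mu> c * (of_nat n :: wt \<Rightarrow>\<^sub>0 int) = Poly_Mapping.single \<mu> c * Poly_Mapping.single 0 (of_nat n)"
      by (metis single_of_nat)
    also have "\<dots> = Poly_Mapping.single \<mu> (c * of_nat n)" by (simp only: mult_single add.right_neutral)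
    finally show ?thesis
      by (simp add: right_diff_distrib sum_distrib_left mult_single)
  qed
  have "f * ?R = (\<Sum>\<mu>\<in>Poly_Mapping.keys f. Poly_Mapping.single \<mu> (Poly_Mapping.lookup f \<mu>) * ?R)"
    by (subst pm_decomp[of f]) (simp add: sum_distrib_right)
  then have "LF e (f * ?R) = (\<Sum>\<mu>\<in>Poly_Mapping.keys f. LF e (Poly_Mapping.single \<mu> (Poly_Mapping.lookup f \<mu>) * ?R))"
    by (simp add: LF_sum)
  also have "\<dots> = (\<Sum>\<mu>\<in>Poly_Mapping.keys f. Poly_Mapping.lookup f \<mu> * ((\<Sum>\<nu>\<in>Orb. e (\<mu> + \<nu>)) - int n * e \<mu>))"
    by (rule sum.cong[OF refl], subst one) (simp add: LF_diff LF_sum[OF assms] LF_single sum_distrib_left algebra_simps)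
  finally show ?thesis .
qed

lemma LF_rho_mod:
  fixes f :: "wt \<Rightarrow>\<^sub>0 int"
  assumes "finite Orb" "Poly_Mapping.keys f \<subseteq> L"
    and h: "\<And>\<mu>. \<mu> \<in> L \<Longrightarrow> ((\<Sum>\<nu>\<in>Orb. e (\<mu> + \<nu>)) - int n * e \<mu>) mod 16 = t"
  shows "LF e (f * ((\<Sum>\<nu>\<in>Orb. Poly_Mapping.single \<nu> 1) - of_nat n)) mod 16 = (t * coeff_sum f) mod 16"
proof -
  have "LF e (f * ((\<Sum>\<nu>\<in>Orb. Poly_Mapping.single \<nu> 1) - of_nat n)) mod 16 =
     (\<Sum>\<mu>\<in>Poly_Mapping.keys f. (Poly_Mapping.lookup f \<mu> * ((\<Sum>\<nu>\<in>Orb. e (\<mu> + \<nu>)) - int n * e \<mu>)) mod 16) mod 16"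
    by (simp add: LF_rho[OF assms(1)] mod_sum_eq)
  also have "\<dots> = (\<Sum>\<mu>\<in>Poly_Mapping.keys f. (Poly_Mapping.lookup f \<mu> * t) mod 16) mod 16"
  proof -
    have "\<And>\<mu>. \<mu> \<in> Poly_Mapping.keys f \<Longrightarrow> (Poly_Mapping.lookup f \<mu> * ((\<Sum>\<nu>\<in>Orb. e (\<mu> + \<nu>)) - int n * e \<mu>)) mod 16 = (Poly_Mapping.lookup f \<mu> * t) mod 16"
    proof -
      fix \<mu> assume "\<mu> \<in> Poly_Mapping.keys f"
      then have "\<mu> \<in> L" using assms(2) by auto
      then show "(Poly_Mapping.lookup f \<mu> * ((\<Sum>\<nu>\<in>Orb. e (\<mu> + \<nu>)) - int n * e \<mu>)) mod 16 = (Poly_Mapping.lookup f \<mu> * t) mod 16"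
        by (metis h mod_mult_right_eq)
    qed
    then show ?thesis by (metis (no_types, lifting) sum.cong)
  qed
  also have "\<dots> = (t * coeff_sum f) mod 16"
    by (simp add: mod_sum_eq coeff_sum_def sum_distrib_left mult.commute)
  finally show ?thesis .
qed

lemma LF_Tstar_mod:
  assumes "g \<in> group_ring_on S" "\<And>\<mu>. \<mu> \<in> S \<Longrightarrow> e \<mu> mod 16 = 0"
  shows "LF e g mod 16 = 0"
proof -
  have "LF e g mod 16 = (\<Sum>\<mu>\<in>Poly_Mapping.keys g. (Poly_Mapping.lookup g \<mu> * e \<mu>) mod 16) mod 16"
    unfolding LF_def by (simp add: mod_sum_eq)
  also have "\<dots> = 0"
  proof -
    have "(\<Sum>\<mu>\<in>Poly_Mapping.keys g. (Poly_Mapping.lookup g \<mu> * e \<mu>) mod 16) = 0"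
      using assms unfolding group_ring_on_def
      by (intro sum.neutral) (auto simp: mod_mult_right_eq[of _ "e _", symmetric])
    then show ?thesis by simp
  qed
  finally show ?thesis .
qed


lemma vector_4 [simp]:
 "(vector [x,y,z,w] ::('a::zero)^4)$1 = x"
 "(vector [x,y,z,w] ::('a::zero)^4)$2 = y"
 "(vector [x,y,z,w] ::('a::zero)^4)$3 = z"
 "(vector [x,y,z,w] ::('a::zero)^4)$4 = w"
  unfolding vector_def by simp_all

lemma prod_4: "prod f (UNIV::4 set) = f 1 * f 2 * f 3 * f 4"
  unfolding UNIV_4 by (simp add: ac_simps)

lemma W_orbit_memI:
  assumes "bij \<sigma>" "\<forall>i. s i = 1 \<or> s i = -1" "(\<Prod>i\<in>UNIV. s i) = (1::int)"
    "x = (\<chi> i. of_int (s i) * \<omega> $ (\<sigma> i))"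
  shows "x \<in> W_orbit \<omega>"
proof -
  have "(\<lambda>x. \<chi> i. of_int (s i) * x $ (\<sigma> i)) \<in> D4_Weyl"
    unfolding D4_Weyl_def using assms(1-3) by blast
  then have "\<exists>w. x = w \<omega> \<and> w \<in> D4_Weyl"
    using assms(4) by (intro exI[of _ "\<lambda>x. \<chi> i. of_int (s i) * x $ (\<sigma> i)"]) simp
  then show ?thesis unfolding W_orbit_def by simp
qed
definition L1 :: "wt list" where
  "L1 = [vector [-1, 0, 0, 0],
    vector [0, -1, 0, 0],
    vector [0, 0, -1, 0],
    vector [0, 0, 0, -1],
    vector [0, 0, 0, 1],
    vector [0, 0, 1, 0],
    vector [0, 1, 0, 0],
    vector [1, 0, 0, 0]]"

definition L2 :: "wt list" where
  "L2 = [vector [-1, -1, 0, 0],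
    vector [-1, 0, -1, 0],
    vector [-1, 0, 0, -1],
    vector [-1, 0, 0, 1],
    vector [-1, 0, 1, 0],
    vector [-1, 1, 0, 0],
    vector [0, -1, -1, 0],
    vector [0, -1, 0, -1],
    vector [0, -1, 0, 1],
    vector [0, -1, 1, 0],
    vector [0, 0, -1, -1],
    vector [0, 0, -1, 1],
    vector [0, 0, 1, -1],
    vector [0, 0, 1, 1],
    vector [0, 1, -1, 0],
    vector [0, 1, 0, -1],
    vector [0, 1, 0, 1],
    vector [0, 1, 1, 0],
    vector [1, -1, 0, 0],
    vector [1, 0, -1, 0],
    vector [1, 0, 0, -1],
    vector [1, 0, 0, 1],
    vector [1, 0, 1, 0],
    vector [1, 1, 0, 0]]"

definition L3 :: "wt list" where
  "L3 = [vector [-(1/2), -(1/2), -(1/2), 1/2],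
    vector [-(1/2), -(1/2), 1/2, -(1/2)],
    vector [-(1/2), 1/2, -(1/2), -(1/2)],
    vector [-(1/2), 1/2, 1/2, 1/2],
    vector [1/2, -(1/2), -(1/2), -(1/2)],
    vector [1/2, -(1/2), 1/2, 1/2],
    vector [1/2, 1/2, -(1/2), 1/2],
    vector [1/2, 1/2, 1/2, -(1/2)]]"

definition L4 :: "wt list" where
  "L4 = [vector [-(1/2), -(1/2), -(1/2), -(1/2)],
    vector [-(1/2), -(1/2), 1/2, 1/2],
    vector [-(1/2), 1/2, -(1/2), 1/2],
    vector [-(1/2), 1/2, 1/2, -(1/2)],
    vector [1/2, -(1/2), -(1/2), 1/2],
    vector [1/2, -(1/2), 1/2, -(1/2)],
    vector [1/2, 1/2, -(1/2), -(1/2)],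
    vector [1/2, 1/2, 1/2, 1/2]]"

lemma L1_sub: "set L1 \<subseteq> W_orbit omega1"
  unfolding L1_def set_simps insert_subset
  apply (intro conjI empty_subsetI)
  subgoal by (rule W_orbit_memI[where \<sigma>="Transposition.transpose 1 1" and s="\<lambda>i. (vector [-1, -1, 1, 1] :: int^4) $ i"]) (simp_all add: bij_comp vec_eq_iff forall_4 prod_4 omega1_def)
  subgoal by (rule W_orbit_memI[where \<sigma>="Transposition.transpose 2 1" and s="\<lambda>i. (vector [1, -1, -1, 1] :: int^4) $ i"]) (simp_all add: bij_comp vec_eq_iff forall_4 prod_4 omega1_def)
  subgoal by (rule W_orbit_memI[where \<sigma>="Transposition.transpose 3 1" and s="\<lambda>i. (vector [1, 1, -1, -1] :: int^4) $ i"]) (simp_all add: bij_comp vec_eq_iff forall_4 prod_4 omega1_def)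
  subgoal by (rule W_orbit_memI[where \<sigma>="Transposition.transpose 4 1" and s="\<lambda>i. (vector [-1, 1, 1, -1] :: int^4) $ i"]) (simp_all add: bij_comp vec_eq_iff forall_4 prod_4 omega1_def)
  subgoal by (rule W_orbit_memI[where \<sigma>="Transposition.transpose 4 1" and s="\<lambda>i. (vector [1, 1, 1, 1] :: int^4) $ i"]) (simp_all add: bij_comp vec_eq_iff forall_4 prod_4 omega1_def)
  subgoal by (rule W_orbit_memI[where \<sigma>="Transposition.transpose 3 1" and s="\<lambda>i. (vector [1, 1, 1, 1] :: int^4) $ i"]) (simp_all add: bij_comp vec_eq_iff forall_4 prod_4 omega1_def)
  subgoal by (rule W_orbit_memI[where \<sigma>="Transposition.transpose 2 1" and s="\<lambda>i. (vector [1, 1, 1, 1] :: int^4) $ i"]) (simp_all add: bij_comp vec_eq_iff forall_4 prod_4 omega1_def)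
  subgoal by (rule W_orbit_memI[where \<sigma>="Transposition.transpose 1 1" and s="\<lambda>i. (vector [1, 1, 1, 1] :: int^4) $ i"]) (simp_all add: bij_comp vec_eq_iff forall_4 prod_4 omega1_def)
  done

lemma L2_sub: "set L2 \<subseteq> W_orbit omega2"
  unfolding L2_def set_simps insert_subset
  apply (intro conjI empty_subsetI)
  subgoal by (rule W_orbit_memI[where \<sigma>="Transposition.transpose 2 2 \<circ> Transposition.transpose 1 1" and s="\<lambda>i. (vector [-1, -1, 1, 1] :: int^4) $ i"]) (simp_all add: bij_comp vec_eq_iff forall_4 prod_4 omega2_def)
  subgoal by (rule W_orbit_memI[where \<sigma>="Transposition.transpose 3 2 \<circ> Transposition.transpose 1 1" and s="\<lambda>i. (vector [-1, 1, -1, 1] :: int^4) $ i"]) (simp_all add: bij_comp vec_eq_iff forall_4 prod_4 omega2_def)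
  subgoal by (rule W_orbit_memI[where \<sigma>="Transposition.transpose 4 2 \<circ> Transposition.transpose 1 1" and s="\<lambda>i. (vector [-1, 1, 1, -1] :: int^4) $ i"]) (simp_all add: bij_comp vec_eq_iff forall_4 prod_4 omega2_def)
  subgoal by (rule W_orbit_memI[where \<sigma>="Transposition.transpose 4 2 \<circ> Transposition.transpose 1 1" and s="\<lambda>i. (vector [-1, -1, 1, 1] :: int^4) $ i"]) (simp_all add: bij_comp vec_eq_iff forall_4 prod_4 omega2_def)
  subgoal by (rule W_orbit_memI[where \<sigma>="Transposition.transpose 3 2 \<circ> Transposition.transpose 1 1" and s="\<lambda>i. (vector [-1, -1, 1, 1] :: int^4) $ i"]) (simp_all add: bij_comp vec_eq_iff forall_4 prod_4 omega2_def)
  subgoal by (rule W_orbit_memI[where \<sigma>="Transposition.transpose 2 2 \<circ> Transposition.transpose 1 1" and s="\<lambda>i. (vector [-1, 1, -1, 1] :: int^4) $ i"]) (simp_all add: bij_comp vec_eq_iff forall_4 prod_4 omega2_def)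
  subgoal by (rule W_orbit_memI[where \<sigma>="Transposition.transpose 3 2 \<circ> Transposition.transpose 2 1" and s="\<lambda>i. (vector [1, -1, -1, 1] :: int^4) $ i"]) (simp_all add: bij_comp vec_eq_iff forall_4 prod_4 omega2_def)
  subgoal by (rule W_orbit_memI[where \<sigma>="Transposition.transpose 4 2 \<circ> Transposition.transpose 2 1" and s="\<lambda>i. (vector [1, -1, 1, -1] :: int^4) $ i"]) (simp_all add: bij_comp vec_eq_iff forall_4 prod_4 omega2_def)
  subgoal by (rule W_orbit_memI[where \<sigma>="Transposition.transpose 4 2 \<circ> Transposition.transpose 2 1" and s="\<lambda>i. (vector [-1, -1, 1, 1] :: int^4) $ i"]) (simp_all add: bij_comp vec_eq_iff forall_4 prod_4 omega2_def)
  subgoal by (rule W_orbit_memI[where \<sigma>="Transposition.transpose 3 2 \<circ> Transposition.transpose 2 1" and s="\<lambda>i. (vector [-1, -1, 1, 1] :: int^4) $ i"]) (simp_all add: bij_comp vec_eq_iff forall_4 prod_4 omega2_def)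
  subgoal by (rule W_orbit_memI[where \<sigma>="Transposition.transpose 4 2 \<circ> Transposition.transpose 3 1" and s="\<lambda>i. (vector [1, 1, -1, -1] :: int^4) $ i"]) (simp_all add: bij_comp vec_eq_iff forall_4 prod_4 omega2_def)
  subgoal by (rule W_orbit_memI[where \<sigma>="Transposition.transpose 4 2 \<circ> Transposition.transpose 3 1" and s="\<lambda>i. (vector [-1, 1, -1, 1] :: int^4) $ i"]) (simp_all add: bij_comp vec_eq_iff forall_4 prod_4 omega2_def)
  subgoal by (rule W_orbit_memI[where \<sigma>="Transposition.transpose 4 2 \<circ> Transposition.transpose 3 1" and s="\<lambda>i. (vector [-1, 1, 1, -1] :: int^4) $ i"]) (simp_all add: bij_comp vec_eq_iff forall_4 prod_4 omega2_def)
  subgoal by (rule W_orbit_memI[where \<sigma>="Transposition.transpose 4 2 \<circ> Transposition.transpose 3 1" and s="\<lambda>i. (vector [1, 1, 1, 1] :: int^4) $ i"]) (simp_all add: bij_comp vec_eq_iff forall_4 prod_4 omega2_def)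
  subgoal by (rule W_orbit_memI[where \<sigma>="Transposition.transpose 3 2 \<circ> Transposition.transpose 2 1" and s="\<lambda>i. (vector [-1, 1, -1, 1] :: int^4) $ i"]) (simp_all add: bij_comp vec_eq_iff forall_4 prod_4 omega2_def)
  subgoal by (rule W_orbit_memI[where \<sigma>="Transposition.transpose 4 2 \<circ> Transposition.transpose 2 1" and s="\<lambda>i. (vector [-1, 1, 1, -1] :: int^4) $ i"]) (simp_all add: bij_comp vec_eq_iff forall_4 prod_4 omega2_def)
  subgoal by (rule W_orbit_memI[where \<sigma>="Transposition.transpose 4 2 \<circ> Transposition.transpose 2 1" and s="\<lambda>i. (vector [1, 1, 1, 1] :: int^4) $ i"]) (simp_all add: bij_comp vec_eq_iff forall_4 prod_4 omega2_def)
  subgoal by (rule W_orbit_memI[where \<sigma>="Transposition.transpose 3 2 \<circ> Transposition.transpose 2 1" and s="\<lambda>i. (vector [1, 1, 1, 1] :: int^4) $ i"]) (simp_all add: bij_comp vec_eq_iff forall_4 prod_4 omega2_def)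
  subgoal by (rule W_orbit_memI[where \<sigma>="Transposition.transpose 2 2 \<circ> Transposition.transpose 1 1" and s="\<lambda>i. (vector [1, -1, -1, 1] :: int^4) $ i"]) (simp_all add: bij_comp vec_eq_iff forall_4 prod_4 omega2_def)
  subgoal by (rule W_orbit_memI[where \<sigma>="Transposition.transpose 3 2 \<circ> Transposition.transpose 1 1" and s="\<lambda>i. (vector [1, -1, -1, 1] :: int^4) $ i"]) (simp_all add: bij_comp vec_eq_iff forall_4 prod_4 omega2_def)
  subgoal by (rule W_orbit_memI[where \<sigma>="Transposition.transpose 4 2 \<circ> Transposition.transpose 1 1" and s="\<lambda>i. (vector [1, -1, 1, -1] :: int^4) $ i"]) (simp_all add: bij_comp vec_eq_iff forall_4 prod_4 omega2_def)
  subgoal by (rule W_orbit_memI[where \<sigma>="Transposition.transpose 4 2 \<circ> Transposition.transpose 1 1" and s="\<lambda>i. (vector [1, 1, 1, 1] :: int^4) $ i"]) (simp_all add: bij_comp vec_eq_iff forall_4 prod_4 omega2_def)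
  subgoal by (rule W_orbit_memI[where \<sigma>="Transposition.transpose 3 2 \<circ> Transposition.transpose 1 1" and s="\<lambda>i. (vector [1, 1, 1, 1] :: int^4) $ i"]) (simp_all add: bij_comp vec_eq_iff forall_4 prod_4 omega2_def)
  subgoal by (rule W_orbit_memI[where \<sigma>="Transposition.transpose 2 2 \<circ> Transposition.transpose 1 1" and s="\<lambda>i. (vector [1, 1, 1, 1] :: int^4) $ i"]) (simp_all add: bij_comp vec_eq_iff forall_4 prod_4 omega2_def)
  done

lemma L3_sub: "set L3 \<subseteq> W_orbit omega3"
  unfolding L3_def set_simps insert_subset
  apply (intro conjI empty_subsetI)
  subgoal by (rule W_orbit_memI[where \<sigma>="id" and s="\<lambda>i. (vector [-1, -1, -1, -1] :: int^4) $ i"]) (simp_all add: bij_comp vec_eq_iff forall_4 prod_4 omega3_def)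
  subgoal by (rule W_orbit_memI[where \<sigma>="id" and s="\<lambda>i. (vector [-1, -1, 1, 1] :: int^4) $ i"]) (simp_all add: bij_comp vec_eq_iff forall_4 prod_4 omega3_def)
  subgoal by (rule W_orbit_memI[where \<sigma>="id" and s="\<lambda>i. (vector [-1, 1, -1, 1] :: int^4) $ i"]) (simp_all add: bij_comp vec_eq_iff forall_4 prod_4 omega3_def)
  subgoal by (rule W_orbit_memI[where \<sigma>="id" and s="\<lambda>i. (vector [-1, 1, 1, -1] :: int^4) $ i"]) (simp_all add: bij_comp vec_eq_iff forall_4 prod_4 omega3_def)
  subgoal by (rule W_orbit_memI[where \<sigma>="id" and s="\<lambda>i. (vector [1, -1, -1, 1] :: int^4) $ i"]) (simp_all add: bij_comp vec_eq_iff forall_4 prod_4 omega3_def)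
  subgoal by (rule W_orbit_memI[where \<sigma>="id" and s="\<lambda>i. (vector [1, -1, 1, -1] :: int^4) $ i"]) (simp_all add: bij_comp vec_eq_iff forall_4 prod_4 omega3_def)
  subgoal by (rule W_orbit_memI[where \<sigma>="id" and s="\<lambda>i. (vector [1, 1, -1, -1] :: int^4) $ i"]) (simp_all add: bij_comp vec_eq_iff forall_4 prod_4 omega3_def)
  subgoal by (rule W_orbit_memI[where \<sigma>="id" and s="\<lambda>i. (vector [1, 1, 1, 1] :: int^4) $ i"]) (simp_all add: bij_comp vec_eq_iff forall_4 prod_4 omega3_def)
  done

lemma L4_sub: "set L4 \<subseteq> W_orbit omega4"
  unfolding L4_def set_simps insert_subset
  apply (intro conjI empty_subsetI)
  subgoal by (rule W_orbit_memI[where \<sigma>="id" and s="\<lambda>i. (vector [-1, -1, -1, -1] :: int^4) $ i"]) (simp_all add: bij_comp vec_eq_iff forall_4 prod_4 omega4_def)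
  subgoal by (rule W_orbit_memI[where \<sigma>="id" and s="\<lambda>i. (vector [-1, -1, 1, 1] :: int^4) $ i"]) (simp_all add: bij_comp vec_eq_iff forall_4 prod_4 omega4_def)
  subgoal by (rule W_orbit_memI[where \<sigma>="id" and s="\<lambda>i. (vector [-1, 1, -1, 1] :: int^4) $ i"]) (simp_all add: bij_comp vec_eq_iff forall_4 prod_4 omega4_def)
  subgoal by (rule W_orbit_memI[where \<sigma>="id" and s="\<lambda>i. (vector [-1, 1, 1, -1] :: int^4) $ i"]) (simp_all add: bij_comp vec_eq_iff forall_4 prod_4 omega4_def)
  subgoal by (rule W_orbit_memI[where \<sigma>="id" and s="\<lambda>i. (vector [1, -1, -1, 1] :: int^4) $ i"]) (simp_all add: bij_comp vec_eq_iff forall_4 prod_4 omega4_def)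
  subgoal by (rule W_orbit_memI[where \<sigma>="id" and s="\<lambda>i. (vector [1, -1, 1, -1] :: int^4) $ i"]) (simp_all add: bij_comp vec_eq_iff forall_4 prod_4 omega4_def)
  subgoal by (rule W_orbit_memI[where \<sigma>="id" and s="\<lambda>i. (vector [1, 1, -1, -1] :: int^4) $ i"]) (simp_all add: bij_comp vec_eq_iff forall_4 prod_4 omega4_def)
  subgoal by (rule W_orbit_memI[where \<sigma>="id" and s="\<lambda>i. (vector [1, 1, 1, 1] :: int^4) $ i"]) (simp_all add: bij_comp vec_eq_iff forall_4 prod_4 omega4_def)
  done


lemma vector4_eq: "(vector [a,b,c,d] :: 'a::zero^4) = vector [a',b',c',d'] \<longleftrightarrow> a = a' \<and> b = b' \<and> c = c' \<and> d = d'"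
  by (simp add: vec_eq_iff forall_4)

lemma vector4_expand: "(x :: 'a::zero^4) = vector [x$1, x$2, x$3, x$4]"
  by (simp add: vec_eq_iff forall_4)

lemma W_orbit_E:
  assumes "x \<in> W_orbit \<omega>"
  obtains \<sigma> s where "bij \<sigma>" "\<forall>i. s i = 1 \<or> s i = (-1::int)" "s 1 * s 2 * s 3 * s 4 = 1"
    "\<And>i. x $ i = of_int (s i) * \<omega> $ (\<sigma> i)"
proof -
  from assms obtain w where "x = w \<omega>" "w \<in> D4_Weyl" unfolding W_orbit_def by blast
  then obtain \<sigma> s where "bij \<sigma>" "\<forall>i. s i = 1 \<or> s i = (-1::int)" "(\<Prod>i\<in>UNIV. s i) = 1"
    "x = (\<chi> i. of_int (s i) * \<omega> $ (\<sigma> i))" unfolding D4_Weyl_def by blast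
  then show ?thesis using that[of \<sigma> s] by (simp add: prod_4)
qed

lemma L4_sup: "W_orbit omega4 \<subseteq> set L4"
proof
  fix x assume "x \<in> W_orbit omega4"
  then obtain \<sigma> s where s: "\<forall>i. s i = 1 \<or> s i = (-1::int)" and p: "s 1 * s 2 * s 3 * s 4 = 1"
    and xi: "\<And>i. x $ i = of_int (s i) * omega4 $ (\<sigma> i)" by (rule W_orbit_E) blast
  have o: "\<forall>k. omega4 $ k = 1/2" by (simp add: forall_4 omega4_def)
  have x: "x = vector [of_int (s 1) * (1/2), of_int (s 2) * (1/2), of_int (s 3) * (1/2), of_int (s 4) * (1/2)]"
    by (subst vector4_expand) (simp add: xi o)
  from s have "s 1 = 1 \<or> s 1 = -1" "s 2 = 1 \<or> s 2 = -1" "s 3 = 1 \<or> s 3 = -1" "s 4 = 1 \<or> s 4 = -1" by auto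
  then show "x \<in> set L4" using p x by (elim disjE) (simp_all add: L4_def vector4_eq)
qed

lemma L3_sup: "W_orbit omega3 \<subseteq> set L3"
proof
  fix x assume "x \<in> W_orbit omega3"
  then obtain \<sigma> s where b: "bij \<sigma>" and s: "\<forall>i. s i = 1 \<or> s i = (-1::int)" and p: "s 1 * s 2 * s 3 * s 4 = 1"
    and xi: "\<And>i. x $ i = of_int (s i) * omega3 $ (\<sigma> i)" by (erule W_orbit_E)
  have o: "\<forall>k. omega3 $ k = (if k = 4 then -(1/2) else 1/2)" by (simp add: forall_4 omega3_def)
  obtain m where m: "\<sigma> m = 4" using b by (metis bij_pointE)
  have sm: "\<And>i. \<sigma> i = 4 \<longleftrightarrow> i = m" using b m by (metis bij_pointE)
  have x: "x = vector [of_int (s 1) * (if 1 = m then -(1/2) else 1/2), of_int (s 2) * (if 2 = m then -(1/2) else 1/2),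
     of_int (s 3) * (if 3 = m then -(1/2) else 1/2), of_int (s 4) * (if 4 = m then -(1/2) else 1/2)]"
    by (subst vector4_expand) (simp add: xi o sm)
  from s have "s 1 = 1 \<or> s 1 = -1" "s 2 = 1 \<or> s 2 = -1" "s 3 = 1 \<or> s 3 = -1" "s 4 = 1 \<or> s 4 = -1" by auto
  then show "x \<in> set L3" using p x exhaust_4[of m] by (elim disjE) (simp_all add: L3_def vector4_eq)
qed

lemma L1_sup: "W_orbit omega1 \<subseteq> set L1"
proof
  fix x assume "x \<in> W_orbit omega1"
  then obtain \<sigma> s where b: "bij \<sigma>" and s: "\<forall>i. s i = 1 \<or> s i = (-1::int)"
    and xi: "\<And>i. x $ i = of_int (s i) * omega1 $ (\<sigma> i)" by (rule W_orbit_E) blast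
  have o: "\<forall>k. omega1 $ k = (if k = 1 then 1 else 0)" by (simp add: forall_4 omega1_def)
  obtain m where m: "\<sigma> m = 1" using b by (metis bij_pointE)
  have sm: "\<And>i. \<sigma> i = 1 \<longleftrightarrow> i = m" using b m by (metis bij_pointE)
  have x: "x = vector [of_int (s 1) * (if 1 = m then 1 else 0), of_int (s 2) * (if 2 = m then 1 else 0),
     of_int (s 3) * (if 3 = m then 1 else 0), of_int (s 4) * (if 4 = m then 1 else 0)]"
    by (subst vector4_expand) (simp add: xi o sm)
  from s have "s 1 = 1 \<or> s 1 = -1" "s 2 = 1 \<or> s 2 = -1" "s 3 = 1 \<or> s 3 = -1" "s 4 = 1 \<or> s 4 = -1" by auto
  then show "x \<in> set L1" using x exhaust_4[of m] by (elim disjE) (simp_all add: L1_def vector4_eq)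
qed

lemma L2_sup: "W_orbit omega2 \<subseteq> set L2"
proof
  fix x assume "x \<in> W_orbit omega2"
  then obtain \<sigma> s where b: "bij \<sigma>" and s: "\<forall>i. s i = 1 \<or> s i = (-1::int)"
    and xi: "\<And>i. x $ i = of_int (s i) * omega2 $ (\<sigma> i)" by (rule W_orbit_E) blast
  have o: "\<forall>k. omega2 $ k = (if k = 1 \<or> k = 2 then 1 else 0)" by (simp add: forall_4 omega2_def)
  obtain m where m: "\<sigma> m = 1" using b by (metis bij_pointE)
  obtain n where n: "\<sigma> n = 2" using b by (metis bij_pointE)
  have sm: "\<And>i. \<sigma> i = 1 \<longleftrightarrow> i = m" using b m by (metis bij_pointE)
  have sn: "\<And>i. \<sigma> i = 2 \<longleftrightarrow> i = n" using b n by (metis bij_pointE)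
  have mn: "m \<noteq> n" using m n by auto
  have x: "x = vector [of_int (s 1) * (if 1 = m \<or> 1 = n then 1 else 0), of_int (s 2) * (if 2 = m \<or> 2 = n then 1 else 0),
     of_int (s 3) * (if 3 = m \<or> 3 = n then 1 else 0), of_int (s 4) * (if 4 = m \<or> 4 = n then 1 else 0)]"
    by (subst vector4_expand) (simp add: xi o sm sn)
  from s have "s 1 = 1 \<or> s 1 = -1" "s 2 = 1 \<or> s 2 = -1" "s 3 = 1 \<or> s 3 = -1" "s 4 = 1 \<or> s 4 = -1" by auto
  then show "x \<in> set L2" using x mn exhaust_4[of m] exhaust_4[of n] by (elim disjE) (simp_all add: L2_def vector4_eq)
qed

lemma L_distinct: "distinct L1" "distinct L2" "distinct L3" "distinct L4"
  by (simp_all add: L1_def L2_def L3_def L4_def vector4_eq)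




definition cA :: "wt \<Rightarrow> int" where "cA x = \<lfloor>x$1 - x$2\<rfloor>"
definition cB :: "wt \<Rightarrow> int" where "cB x = \<lfloor>x$2 - x$3\<rfloor>"
definition cC :: "wt \<Rightarrow> int" where "cC x = \<lfloor>x$3 - x$4\<rfloor>"
definition cD :: "wt \<Rightarrow> int" where "cD x = \<lfloor>x$3 + x$4\<rfloor>"

definition intg :: "wt \<Rightarrow> bool" where
  "intg x \<longleftrightarrow> of_int (cA x) = x$1 - x$2 \<and> of_int (cB x) = x$2 - x$3 \<and> of_int (cC x) = x$3 - x$4 \<and> of_int (cD x) = x$3 + x$4"

definition crd :: "wt \<Rightarrow> int \<times> int \<times> int \<times> int" where
  "crd x = (cA x, cB x, cC x, cD x)"

definition ell :: "(int \<Rightarrow> int \<Rightarrow> int \<Rightarrow> int \<Rightarrow> int) \<Rightarrow> wt \<Rightarrow> int" where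
  "ell P x = P (cA x mod 4) (cB x mod 4) (cC x mod 4) (cD x mod 4)"

definition Hc :: "(int \<Rightarrow> int \<Rightarrow> int \<Rightarrow> int \<Rightarrow> int) \<Rightarrow> (int \<times> int \<times> int \<times> int) list \<Rightarrow> int \<Rightarrow> int \<Rightarrow> int \<Rightarrow> int \<Rightarrow> int" where
  "Hc P K a b c d = sum_list (map (\<lambda>(k1,k2,k3,k4). P ((a+k1) mod 4) ((b+k2) mod 4) ((c+k3) mod 4) ((d+k4) mod 4)) K)
     - int (length K) * P (a mod 4) (b mod 4) (c mod 4) (d mod 4)"

definition allc :: "(int \<Rightarrow> int \<Rightarrow> int \<Rightarrow> int \<Rightarrow> bool) \<Rightarrow> bool" where
  "allc Q \<longleftrightarrow> list_all (\<lambda>a. list_all (\<lambda>b. list_all (\<lambda>c. list_all (\<lambda>d. Q a b c d) [0,1,2,3]) [0,1,2,3]) [0,1,2,3]) [0,1,2,3]"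

lemma ex_int_rat [simp]: "\<exists>n. (-1::rat) = of_int n" "\<exists>n. of_int n = (-1::rat)"
  "\<exists>n. (-2::rat) = of_int n" "\<exists>n. of_int n = (-2::rat)"
     apply (rule exI[of _ "-1"], simp)
    apply (rule exI[of _ "-1"], simp)
   apply (rule exI[of _ "-2"], simp)
  apply (rule exI[of _ "-2"], simp)
  done

lemma floor_m1 [simp]: "\<lfloor>-1::rat\<rfloor> = -1" "\<lfloor>-2::rat\<rfloor> = -2"
  by (simp_all add: floor_eq_iff)

definition P1 :: "int \<Rightarrow> int \<Rightarrow> int \<Rightarrow> int \<Rightarrow> int" where
  "P1 a b c d = 4*d + 2*d^2 + 6*d^3 + 3*c^2*d^2 + 6*a + 4*a*d + 2*a*d^2 + a^2 + 2*a^2*d + a^2*d^2 + a^2*c^2"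

definition P3 :: "int \<Rightarrow> int \<Rightarrow> int \<Rightarrow> int \<Rightarrow> int" where
  "P3 a b c d = 8*d + 4*d^2 + 2*d^3 + 6*c + 4*c*d + 2*c*d^2 + c^2 + 2*c^2*d + c^2*d^2 + 4*b*d^2 + 4*b*d^3 + 4*a*b*d + 4*a*b*d^2 + a^2*d^2 + a^2*c^2"

definition P4 :: "int \<Rightarrow> int \<Rightarrow> int \<Rightarrow> int \<Rightarrow> int" where
  "P4 a b c d = 2*d + 7*d^2 + 2*d^3 + 3*c^2*d^2 + 4*b*d^2 + 4*b*d^3 + 4*a*b*d + 4*a*b*d^2 + a^2*d^2 + a^2*c^2"

definition K1 :: "(int \<times> int \<times> int \<times> int) list" where
  "K1 = [(-1,0,0,0), (1,-1,0,0), (0,1,-1,-1), (0,0,1,-1), (0,0,-1,1), (0,-1,1,1), (-1,1,0,0), (1,0,0,0)]"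

lemma K1_crd: "map crd L1 = K1"
  by (simp add: L1_def K1_def crd_def cA_def cB_def cC_def cD_def)

lemma L1_intg: "\<forall>v\<in>set L1. intg v"
  by (simp add: L1_def intg_def cA_def cB_def cC_def cD_def)

definition K2 :: "(int \<times> int \<times> int \<times> int) list" where
  "K2 = [(0,-1,0,0), (-1,1,-1,-1), (-1,0,1,-1), (-1,0,-1,1), (-1,-1,1,1), (-2,1,0,0), (1,0,-1,-1), (1,-1,1,-1), (1,-1,-1,1), (1,-2,1,1), (0,1,0,-2), (0,1,-2,0), (0,-1,2,0), (0,-1,0,2), (-1,2,-1,-1), (-1,1,1,-1), (-1,1,-1,1), (-1,0,1,1), (2,-1,0,0), (1,1,-1,-1), (1,0,1,-1), (1,0,-1,1), (1,-1,1,1), (0,1,0,0)]"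

lemma K2_crd: "map crd L2 = K2"
  by (simp add: L2_def K2_def crd_def cA_def cB_def cC_def cD_def)

lemma L2_intg: "\<forall>v\<in>set L2. intg v"
  by (simp add: L2_def intg_def cA_def cB_def cC_def cD_def)

definition K3 :: "(int \<times> int \<times> int \<times> int) list" where
  "K3 = [(0,0,-1,0), (0,-1,1,0), (-1,1,0,-1), (-1,0,0,1), (1,0,0,-1), (1,-1,0,1), (0,1,-1,0), (0,0,1,0)]"

lemma K3_crd: "map crd L3 = K3"
  by (simp add: L3_def K3_def crd_def cA_def cB_def cC_def cD_def)

lemma L3_intg: "\<forall>v\<in>set L3. intg v"
  by (simp add: L3_def intg_def cA_def cB_def cC_def cD_def)

definition K4 :: "(int \<times> int \<times> int \<times> int) list" where
  "K4 = [(0,0,0,-1), (0,-1,0,1), (-1,1,-1,0), (-1,0,1,0), (1,0,-1,0), (1,-1,1,0), (0,1,0,-1), (0,0,0,1)]"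

lemma K4_crd: "map crd L4 = K4"
  by (simp add: L4_def K4_def crd_def cA_def cB_def cC_def cD_def)

lemma L4_intg: "\<forall>v\<in>set L4. intg v"
  by (simp add: L4_def intg_def cA_def cB_def cC_def cD_def)

lemma chk_P1_K1: "allc (\<lambda>a b c d. Hc P1 K1 a b c d mod 16 = 8)"
  by code_simp

lemma chk_P1_K2: "allc (\<lambda>a b c d. Hc P1 K2 a b c d mod 16 = 0)"
  by code_simp

lemma chk_P1_K3: "allc (\<lambda>a b c d. Hc P1 K3 a b c d mod 16 = 0)"
  by code_simp

lemma chk_P1_K4: "allc (\<lambda>a b c d. Hc P1 K4 a b c d mod 16 = 0)"
  by code_simp

lemma chkT_P1: "allc (\<lambda>a b c d. a mod 2 = c mod 2 \<longrightarrow> c mod 2 = d mod 2 \<longrightarrow> P1 a b c d mod 16 = 0)"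
  by code_simp

lemma chk_P3_K1: "allc (\<lambda>a b c d. Hc P3 K1 a b c d mod 16 = 0)"
  by code_simp

lemma chk_P3_K2: "allc (\<lambda>a b c d. Hc P3 K2 a b c d mod 16 = 0)"
  by code_simp

lemma chk_P3_K3: "allc (\<lambda>a b c d. Hc P3 K3 a b c d mod 16 = 8)"
  by code_simp

lemma chk_P3_K4: "allc (\<lambda>a b c d. Hc P3 K4 a b c d mod 16 = 0)"
  by code_simp

lemma chkT_P3: "allc (\<lambda>a b c d. a mod 2 = c mod 2 \<longrightarrow> c mod 2 = d mod 2 \<longrightarrow> P3 a b c d mod 16 = 0)"
  by code_simp

lemma chk_P4_K1: "allc (\<lambda>a b c d. Hc P4 K1 a b c d mod 16 = 0)"
  by code_simp

lemma chk_P4_K2: "allc (\<lambda>a b c d. Hc P4 K2 a b c d mod 16 = 0)"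
  by code_simp

lemma chk_P4_K3: "allc (\<lambda>a b c d. Hc P4 K3 a b c d mod 16 = 0)"
  by code_simp

lemma chk_P4_K4: "allc (\<lambda>a b c d. Hc P4 K4 a b c d mod 16 = 8)"
  by code_simp

lemma chkT_P4: "allc (\<lambda>a b c d. a mod 2 = c mod 2 \<longrightarrow> c mod 2 = d mod 2 \<longrightarrow> P4 a b c d mod 16 = 0)"
  by code_simp



lemma intg_add:
  assumes "intg x" "intg y"
  shows "cA (x + y) = cA x + cA y" "cB (x + y) = cB x + cB y"
        "cC (x + y) = cC x + cC y" "cD (x + y) = cD x + cD y"
proof -
  have "(x + y)$1 - (x + y)$2 = of_int (cA x + cA y)" using assms unfolding intg_def by simp
  then show "cA (x + y) = cA x + cA y" unfolding cA_def by (metis floor_of_int)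
  have "(x + y)$2 - (x + y)$3 = of_int (cB x + cB y)" using assms unfolding intg_def by simp
  then show "cB (x + y) = cB x + cB y" unfolding cB_def by (metis floor_of_int)
  have "(x + y)$3 - (x + y)$4 = of_int (cC x + cC y)" using assms unfolding intg_def by simp
  then show "cC (x + y) = cC x + cC y" unfolding cC_def by (metis floor_of_int)
  have "(x + y)$3 + (x + y)$4 = of_int (cD x + cD y)" using assms unfolding intg_def by simp
  then show "cD (x + y) = cD x + cD y" unfolding cD_def by (metis floor_of_int)
qed

lemma intg_of_ints:
  assumes "x$1 - x$2 = of_int a" "x$2 - x$3 = of_int b" "x$3 - x$4 = of_int c" "x$3 + x$4 = of_int d"
  shows "intg x" "cA x = a" "cB x = b" "cC x = c" "cD x = d"
  using assms unfolding intg_def cA_def cB_def cC_def cD_def by simp_all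

lemma lattice_intg:
  assumes "x \<in> D4_lattice"
  shows "intg x"
proof -
  from assms obtain a b c d :: int where x: "x = of_int a *s omega1 + of_int b *s omega2 + of_int c *s omega3 + of_int d *s omega4"
    unfolding D4_lattice_def by blast
  have "x$1 - x$2 = of_int a" "x$2 - x$3 = of_int b" "x$3 - x$4 = of_int c" "x$3 + x$4 = of_int d"
    unfolding x by (simp_all add: omega1_def omega2_def omega3_def omega4_def field_simps)
  then show ?thesis by (rule intg_of_ints)
qed

lemma Tstar_props:
  assumes "x \<in> T_star"
  shows "intg x \<and> cA x mod 2 = cC x mod 2 \<and> cC x mod 2 = cD x mod 2"
proof -
  from assms have i: "\<forall>i. x $ i \<in> \<int>" and e: "\<exists>k::int. (\<Sum>i\<in>UNIV. x $ i) = of_int (2 * k)"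
    unfolding T_star_def by auto
  obtain k where k: "x$1 + x$2 + x$3 + x$4 = of_int (2 * k)" using e by (auto simp: sum_4)
  obtain k1 where k1: "x$1 = of_int k1" using i by (metis Ints_cases)
  obtain k2 where k2: "x$2 = of_int k2" using i by (metis Ints_cases)
  obtain k3 where k3: "x$3 = of_int k3" using i by (metis Ints_cases)
  obtain k4 where k4: "x$4 = of_int k4" using i by (metis Ints_cases)
  have s: "k1 + k2 + k3 + k4 = 2 * k"
    using k unfolding k1 k2 k3 k4 by (metis of_int_add of_int_eq_iff)
  have "x$1 - x$2 = of_int (k1 - k2)" "x$2 - x$3 = of_int (k2 - k3)" "x$3 - x$4 = of_int (k3 - k4)" "x$3 + x$4 = of_int (k3 + k4)"
    unfolding k1 k2 k3 k4 by simp_all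
  note r = intg_of_ints[OF this]
  show ?thesis using s unfolding r(2-5) using r(1) by presburger
qed

lemma mod4_cases: "(a::int) mod 4 \<in> set [0,1,2,3]"
proof -
  have "a mod 4 = 0 \<or> a mod 4 = 1 \<or> a mod 4 = 2 \<or> a mod 4 = 3" by presburger
  then show ?thesis by auto
qed

lemma allc_apply:
  assumes "allc Q"
  shows "Q (a mod 4) (b mod 4) (c mod 4) (d mod 4)"
  using assms mod4_cases[of a] mod4_cases[of b] mod4_cases[of c] mod4_cases[of d]
  unfolding allc_def list_all_iff by blast

lemma Hc_mod: "Hc P K a b c d = Hc P K (a mod 4) (b mod 4) (c mod 4) (d mod 4)"
  unfolding Hc_def by (simp add: mod_add_left_eq)

lemma orbit_check:
  assumes o: "W_orbit \<omega> = set L" and dl: "distinct L" and K: "map crd L = K"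
    and iL: "\<forall>v\<in>set L. intg v" and ch: "allc (\<lambda>a b c d. Hc P K a b c d mod 16 = t)"
  shows "\<forall>\<mu>\<in>D4_lattice. ((\<Sum>\<nu>\<in>W_orbit \<omega>. ell P (\<mu> + \<nu>)) - int (card (W_orbit \<omega>)) * ell P \<mu>) mod 16 = t"
proof
  fix \<mu> assume "\<mu> \<in> D4_lattice"
  then have im: "intg \<mu>" by (rule lattice_intg)
  have "(\<Sum>\<nu>\<in>W_orbit \<omega>. ell P (\<mu> + \<nu>)) = sum_list (map (\<lambda>\<nu>. ell P (\<mu> + \<nu>)) L)"
    unfolding o by (simp add: sum_list_distinct_conv_sum_set dl)
  also have "map (\<lambda>\<nu>. ell P (\<mu> + \<nu>)) L = map (\<lambda>(k1,k2,k3,k4). P ((cA \<mu>+k1) mod 4) ((cB \<mu>+k2) mod 4) ((cC \<mu>+k3) mod 4) ((cD \<mu>+k4) mod 4)) K"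
    unfolding K[symmetric] map_map
  proof (rule map_cong[OF refl])
    fix \<nu> assume "\<nu> \<in> set L"
    then have "intg \<nu>" using iL by blast
    then show "ell P (\<mu> + \<nu>) = ((\<lambda>(k1,k2,k3,k4). P ((cA \<mu>+k1) mod 4) ((cB \<mu>+k2) mod 4) ((cC \<mu>+k3) mod 4) ((cD \<mu>+k4) mod 4)) \<circ> crd) \<nu>"
      using im by (simp add: ell_def crd_def intg_add)
  qed
  finally have "((\<Sum>\<nu>\<in>W_orbit \<omega>. ell P (\<mu> + \<nu>)) - int (card (W_orbit \<omega>)) * ell P \<mu>) = Hc P K (cA \<mu>) (cB \<mu>) (cC \<mu>) (cD \<mu>)"
    unfolding Hc_def o using K dl by (simp add: distinct_card ell_def length_map[of crd L, symmetric] del: length_map)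
  also have "\<dots> = Hc P K (cA \<mu> mod 4) (cB \<mu> mod 4) (cC \<mu> mod 4) (cD \<mu> mod 4)" by (rule Hc_mod)
  finally show "((\<Sum>\<nu>\<in>W_orbit \<omega>. ell P (\<mu> + \<nu>)) - int (card (W_orbit \<omega>)) * ell P \<mu>) mod 16 = t"
    using allc_apply[OF ch] by simp
qed

lemma Tstar_check:
  assumes "allc (\<lambda>a b c d. a mod 2 = c mod 2 \<longrightarrow> c mod 2 = d mod 2 \<longrightarrow> P a b c d mod 16 = 0)"
  shows "\<And>\<mu>. \<mu> \<in> T_star \<Longrightarrow> ell P \<mu> mod 16 = 0"
proof -
  fix \<mu> assume "\<mu> \<in> T_star"
  then have p: "cA \<mu> mod 2 = cC \<mu> mod 2" "cC \<mu> mod 2 = cD \<mu> mod 2" using Tstar_props by blast+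
  have "(cA \<mu> mod 4) mod 2 = (cC \<mu> mod 4) mod 2" "(cC \<mu> mod 4) mod 2 = (cD \<mu> mod 4) mod 2"
    using p by (simp_all add: mod_mod_cancel)
  then show "ell P \<mu> mod 16 = 0"
    using allc_apply[OF assms, where a="cA \<mu>" and b="cB \<mu>" and c="cC \<mu>" and d="cD \<mu>"] unfolding ell_def by blast
qed

lemma gen:
  fixes f1 f2 f3 f4 :: "wt \<Rightarrow>\<^sub>0 int"
  assumes fin: "finite (W_orbit omega1)" "finite (W_orbit omega2)" "finite (W_orbit omega3)" "finite (W_orbit omega4)"
    and h1: "\<forall>\<mu>\<in>D4_lattice. ((\<Sum>\<nu>\<in>W_orbit omega1. e (\<mu> + \<nu>)) - int (card (W_orbit omega1)) * e \<mu>) mod 16 = t1"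
    and h2: "\<forall>\<mu>\<in>D4_lattice. ((\<Sum>\<nu>\<in>W_orbit omega2. e (\<mu> + \<nu>)) - int (card (W_orbit omega2)) * e \<mu>) mod 16 = t2"
    and h3: "\<forall>\<mu>\<in>D4_lattice. ((\<Sum>\<nu>\<in>W_orbit omega3. e (\<mu> + \<nu>)) - int (card (W_orbit omega3)) * e \<mu>) mod 16 = t3"
    and h4: "\<forall>\<mu>\<in>D4_lattice. ((\<Sum>\<nu>\<in>W_orbit omega4. e (\<mu> + \<nu>)) - int (card (W_orbit omega4)) * e \<mu>) mod 16 = t4"
    and hT: "\<And>\<mu>. \<mu> \<in> T_star \<Longrightarrow> e \<mu> mod 16 = 0"
    and a1: "f1 \<in> group_ring_on D4_lattice" and a2: "f2 \<in> group_ring_on D4_lattice"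
    and a3: "f3 \<in> group_ring_on D4_lattice" and a4: "f4 \<in> group_ring_on D4_lattice"
    and g: "f1 * rho omega1 + f2 * rho omega2 + f3 * rho omega3 + f4 * rho omega4 \<in> group_ring_on T_star"
  shows "(t1 * coeff_sum f1 + t2 * coeff_sum f2 + t3 * coeff_sum f3 + t4 * coeff_sum f4) mod 16 = 0"
proof -
  have m1: "LF e (f1 * rho omega1) mod 16 = (t1 * coeff_sum f1) mod 16"
    unfolding rho_def by (rule LF_rho_mod[where L=D4_lattice]) (use fin(1) a1 h1 in \<open>auto simp: group_ring_on_def\<close>)
  have m2: "LF e (f2 * rho omega2) mod 16 = (t2 * coeff_sum f2) mod 16"
    unfolding rho_def by (rule LF_rho_mod[where L=D4_lattice]) (use fin(2) a2 h2 in \<open>auto simp: group_ring_on_def\<close>)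
  have m3: "LF e (f3 * rho omega3) mod 16 = (t3 * coeff_sum f3) mod 16"
    unfolding rho_def by (rule LF_rho_mod[where L=D4_lattice]) (use fin(3) a3 h3 in \<open>auto simp: group_ring_on_def\<close>)
  have m4: "LF e (f4 * rho omega4) mod 16 = (t4 * coeff_sum f4) mod 16"
    unfolding rho_def by (rule LF_rho_mod[where L=D4_lattice]) (use fin(4) a4 h4 in \<open>auto simp: group_ring_on_def\<close>)
  have z: "LF e (f1 * rho omega1 + f2 * rho omega2 + f3 * rho omega3 + f4 * rho omega4) mod 16 = 0"
    by (rule LF_Tstar_mod[OF g hT])
  then have "(LF e (f1 * rho omega1) + LF e (f2 * rho omega2) + LF e (f3 * rho omega3) + LF e (f4 * rho omega4)) mod 16 = 0"
    by (simp add: LF_add)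
  then show ?thesis using m1 m2 m3 m4 by (metis mod_add_eq)
qed

lemma orbits: "W_orbit omega1 = set L1" "W_orbit omega2 = set L2" "W_orbit omega3 = set L3" "W_orbit omega4 = set L4"
  using L1_sub L1_sup L2_sub L2_sup L3_sub L3_sup L4_sub L4_sup by blast+

lemma for_P:
  fixes f1 f2 f3 f4 :: "wt \<Rightarrow>\<^sub>0 int"
  assumes c1: "allc (\<lambda>a b c d. Hc P K1 a b c d mod 16 = t1)"
    and c2: "allc (\<lambda>a b c d. Hc P K2 a b c d mod 16 = t2)"
    and c3: "allc (\<lambda>a b c d. Hc P K3 a b c d mod 16 = t3)"
    and c4: "allc (\<lambda>a b c d. Hc P K4 a b c d mod 16 = t4)"
    and cT: "allc (\<lambda>a b c d. a mod 2 = c mod 2 \<longrightarrow> c mod 2 = d mod 2 \<longrightarrow> P a b c d mod 16 = 0)"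
    and "f1 \<in> group_ring_on D4_lattice" "f2 \<in> group_ring_on D4_lattice"
    "f3 \<in> group_ring_on D4_lattice" "f4 \<in> group_ring_on D4_lattice"
    "f1 * rho omega1 + f2 * rho omega2 + f3 * rho omega3 + f4 * rho omega4 \<in> group_ring_on T_star"
  shows "(t1 * coeff_sum f1 + t2 * coeff_sum f2 + t3 * coeff_sum f3 + t4 * coeff_sum f4) mod 16 = 0"
proof (rule gen[where e="ell P"])
  show "finite (W_orbit omega1)" "finite (W_orbit omega2)" "finite (W_orbit omega3)" "finite (W_orbit omega4)"
    by (simp_all add: orbits)
  show "\<forall>\<mu>\<in>D4_lattice. ((\<Sum>\<nu>\<in>W_orbit omega1. ell P (\<mu> + \<nu>)) - int (card (W_orbit omega1)) * ell P \<mu>) mod 16 = t1"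
    by (rule orbit_check[OF orbits(1) L_distinct(1) K1_crd L1_intg c1])
  show "\<forall>\<mu>\<in>D4_lattice. ((\<Sum>\<nu>\<in>W_orbit omega2. ell P (\<mu> + \<nu>)) - int (card (W_orbit omega2)) * ell P \<mu>) mod 16 = t2"
    by (rule orbit_check[OF orbits(2) L_distinct(2) K2_crd L2_intg c2])
  show "\<forall>\<mu>\<in>D4_lattice. ((\<Sum>\<nu>\<in>W_orbit omega3. ell P (\<mu> + \<nu>)) - int (card (W_orbit omega3)) * ell P \<mu>) mod 16 = t3"
    by (rule orbit_check[OF orbits(3) L_distinct(3) K3_crd L3_intg c3])
  show "\<forall>\<mu>\<in>D4_lattice. ((\<Sum>\<nu>\<in>W_orbit omega4. ell P (\<mu> + \<nu>)) - int (card (W_orbit omega4)) * ell P \<mu>) mod 16 = t4"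
    by (rule orbit_check[OF orbits(4) L_distinct(4) K4_crd L4_intg c4])
  show "\<And>\<mu>. \<mu> \<in> T_star \<Longrightarrow> ell P \<mu> mod 16 = 0" by (rule Tstar_check[OF cT])
qed (use assms in auto)

theorem proposition10p3:
  fixes f1 f2 f3 f4 :: "wt \<Rightarrow>\<^sub>0 int"
  assumes "f1 \<in> group_ring_on D4_lattice" "f2 \<in> group_ring_on D4_lattice"
    "f3 \<in> group_ring_on D4_lattice" "f4 \<in> group_ring_on D4_lattice"
  assumes "f1 * rho omega1 + f2 * rho omega2 + f3 * rho omega3 + f4 * rho omega4
             \<in> group_ring_on T_star"
  shows "even (coeff_sum f1) \<and> even (coeff_sum f3) \<and> even (coeff_sum f4)"
proof -
  have r1: "(8 * coeff_sum f1 + 0 * coeff_sum f2 + 0 * coeff_sum f3 + 0 * coeff_sum f4) mod 16 = 0"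
    by (rule for_P[OF chk_P1_K1 chk_P1_K2 chk_P1_K3 chk_P1_K4 chkT_P1 assms])
  have r3: "(0 * coeff_sum f1 + 0 * coeff_sum f2 + 8 * coeff_sum f3 + 0 * coeff_sum f4) mod 16 = 0"
    by (rule for_P[OF chk_P3_K1 chk_P3_K2 chk_P3_K3 chk_P3_K4 chkT_P3 assms])
  have r4: "(0 * coeff_sum f1 + 0 * coeff_sum f2 + 0 * coeff_sum f3 + 8 * coeff_sum f4) mod 16 = 0"
    by (rule for_P[OF chk_P4_K1 chk_P4_K2 chk_P4_K3 chk_P4_K4 chkT_P4 assms])
  from r1 r3 r4 show ?thesis by simp presburger
qed

end
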